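(* Let $S$ be a string of length $n$ and let $P\subseteq[n]$ be a $(\tau,\delta)$-partitioning set of $S$ for parameters $1\le\tau\le\delta\le n$. Let $i,j\in[n]$ and let $\ell=\mathrm{LCE}(i,j)$. If $\ell>2\delta$ then $$\{p-i\mid p\in P\cap[i+\delta..i+\ell-\delta-1]\}=\{p-j\mid p\in P\cap[j+\delta..j+\ell-\delta-1]\}.$$
   Context: $[a..b]=\{a,a+1,\dots,b\}$. $\mathrm{LCE}(i,j)=\min\{k\ge0\mid S[i+k]\ne S[j+k]\}$. A prefix of length $y\ge1$ of a string $W$ is a period of $W$ if $W[x]=W[x+y]$ for all $1\le x\le |W|-y$; $\rho_W$ denotes the length of the shortest period, and $W$ is periodic if $\rho_W\le |W|/2$. A set $P\subseteq[n]$ is a $(\tau,\delta)$-partitioning set of $S$ if (1) (local consistency) for any $i,j\in[1+\delta..n-\delta]$ with $S[i-\delta..i+\delta]=S[j-\delta..j+\delta]$ we have $i\in P\Leftrightarrow j\in P$; and (2) (compactness) for any two consecutive elements $p_i<p_{i+1}$ of $P\cup\{1,n+1\}$, either $p_{i+1}-p_i\le\tau$, or $p_{i+1}-p_i>\tau$ and $u=S[p_i..p_{i+1}-1]$ is periodic with $\rho_u\le\tau$. *)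

theory Defs
  imports Main
begin

text \<open>Strings are lists; positions are 1-indexed: S[x] = S ! (x - 1), for x in [1..length S].\<close>

definition chr :: "'a list \<Rightarrow> nat \<Rightarrow> 'a" where
  "chr S x = S ! (x - 1)"

text \<open>Substring S[p..q-1] (1-indexed, length q - p).\<close>
definition substr :: "'a list \<Rightarrow> nat \<Rightarrow> nat \<Rightarrow> 'a list" where
  "substr S p q = take (q - p) (drop (p - 1) S)"

text \<open>LCE(i,j) = min{k \<ge> 0 | S[i+k] \<noteq> S[j+k]}, where a position outside [1..n] counts as a mismatch.\<close>
definition LCE :: "'a list \<Rightarrow> nat \<Rightarrow> nat \<Rightarrow> nat" where
  "LCE S i j = (LEAST k. \<not> (i + k \<le> length S \<and> j + k \<le> length S \<and> chr S (i + k) = chr S (j + k)))"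

definition is_period :: "'a list \<Rightarrow> nat \<Rightarrow> bool" where
  "is_period W y \<longleftrightarrow> 1 \<le> y \<and> y \<le> length W \<and>
     (\<forall>x. 1 \<le> x \<and> x \<le> length W - y \<longrightarrow> chr W x = chr W (x + y))"

definition rho :: "'a list \<Rightarrow> nat" where
  "rho W = (LEAST y. is_period W y)"

definition periodic :: "'a list \<Rightarrow> bool" where
  "periodic W \<longleftrightarrow> 2 * rho W \<le> length W"

definition partitioning_set :: "'a list \<Rightarrow> nat \<Rightarrow> nat \<Rightarrow> nat set \<Rightarrow> bool" where
  "partitioning_set S \<tau> \<delta> P \<longleftrightarrow>
     P \<subseteq> {1..length S} \<and>
     (\<forall>i j. i \<in> {1 + \<delta>..length S - \<delta>} \<and> j \<in> {1 + \<delta>..length S - \<delta>} \<and>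
        (\<forall>t \<le> 2 * \<delta>. chr S (i - \<delta> + t) = chr S (j - \<delta> + t))
        \<longrightarrow> (i \<in> P \<longleftrightarrow> j \<in> P)) \<and>
     (\<forall>p q. p \<in> P \<union> {1, length S + 1} \<and> q \<in> P \<union> {1, length S + 1} \<and> p < q \<and>
        (\<forall>r \<in> P \<union> {1, length S + 1}. \<not> (p < r \<and> r < q))
        \<longrightarrow> q - p \<le> \<tau> \<or> (q - p > \<tau> \<and> periodic (substr S p q) \<and> rho (substr S p q) \<le> \<tau>))"

end

theory Submission
  imports Defs
begin

lemma aux:
  assumes cons: "\<forall>i j. i \<in> {1 + \<delta>..length S - \<delta>} \<and> j \<in> {1 + \<delta>..length S - \<delta>} \<and>
        (\<forall>t \<le> 2 * \<delta>. chr S (i - \<delta> + t) = chr S (j - \<delta> + t))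
        \<longrightarrow> (i \<in> P \<longleftrightarrow> j \<in> P)"
    and agree: "\<forall>k<L. i + k \<le> length S \<and> j + k \<le> length S \<and> chr S (i + k) = chr S (j + k)"
    and i1: "1 \<le> i" and j1: "1 \<le> j" and L: "2 * \<delta> < L"
  shows "(\<lambda>p. p - i) ` (P \<inter> {i + \<delta>..i + L - \<delta> - 1}) \<subseteq> (\<lambda>p. p - j) ` (P \<inter> {j + \<delta>..j + L - \<delta> - 1})"
proof
  fix x assume "x \<in> (\<lambda>p. p - i) ` (P \<inter> {i + \<delta>..i + L - \<delta> - 1})"
  then obtain p where pP: "p \<in> P" and p1: "i + \<delta> \<le> p" and p2: "p \<le> i + L - \<delta> - 1" and x: "x = p - i"
    by auto
  define q where "q = p - i + j"
  have last: "i + (L - 1) \<le> length S" "j + (L - 1) \<le> length S" proof -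
    have "L - 1 < L" using L by simp
    then show "i + (L - 1) \<le> length S" "j + (L - 1) \<le> length S" using agree by blast+
  qed
  have win: "\<forall>t \<le> 2 * \<delta>. chr S (p - \<delta> + t) = chr S (q - \<delta> + t)"
  proof (intro allI impI)
    fix t assume t: "t \<le> 2 * \<delta>"
    define k where "k = p - i - \<delta> + t"
    have "k < L" using k_def t p1 p2 L by linarith
    then have "chr S (i + k) = chr S (j + k)" using agree by blast
    moreover have "i + k = p - \<delta> + t" "j + k = q - \<delta> + t" using k_def q_def p1 by auto
    ultimately show "chr S (p - \<delta> + t) = chr S (q - \<delta> + t)" by simp
  qed
  have "p \<in> {1 + \<delta>..length S - \<delta>}" using p1 p2 i1 last L by auto
  moreover have "q \<in> {1 + \<delta>..length S - \<delta>}" using p1 p2 j1 last L q_def by auto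
  ultimately have "q \<in> P" using cons win pP by blast
  moreover have "j + \<delta> \<le> q" "q \<le> j + L - \<delta> - 1" using p1 p2 q_def L by auto
  moreover have "x = q - j" using x q_def p1 by auto
  ultimately show "x \<in> (\<lambda>p. p - j) ` (P \<inter> {j + \<delta>..j + L - \<delta> - 1})" by auto
qed

theorem lemma7:
  fixes S :: "'a list" and n \<tau> \<delta> i j :: nat and P :: "nat set"
  assumes "n = length S"
    and "partitioning_set S \<tau> \<delta> P"
    and "1 \<le> \<tau>" and "\<tau> \<le> \<delta>" and "\<delta> \<le> n"
    and "i \<in> {1..n}" and "j \<in> {1..n}"
    and "LCE S i j > 2 * \<delta>"
  shows "(\<lambda>p. p - i) ` (P \<inter> {i + \<delta>..i + LCE S i j - \<delta> - 1})
       = (\<lambda>p. p - j) ` (P \<inter> {j + \<delta>..j + LCE S i j - \<delta> - 1})"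
proof -
  have cons: "\<forall>i j. i \<in> {1 + \<delta>..length S - \<delta>} \<and> j \<in> {1 + \<delta>..length S - \<delta>} \<and>
        (\<forall>t \<le> 2 * \<delta>. chr S (i - \<delta> + t) = chr S (j - \<delta> + t))
        \<longrightarrow> (i \<in> P \<longleftrightarrow> j \<in> P)" using assms(2) unfolding partitioning_set_def by blast
  have ag: "\<forall>k<LCE S i j. i + k \<le> length S \<and> j + k \<le> length S \<and> chr S (i + k) = chr S (j + k)"
    unfolding LCE_def using not_less_Least by blast
  have ag2: "\<forall>k<LCE S i j. j + k \<le> length S \<and> i + k \<le> length S \<and> chr S (j + k) = chr S (i + k)"
    using ag by simp
  have cons2: "\<forall>i j. i \<in> {1 + \<delta>..length S - \<delta>} \<and> j \<in> {1 + \<delta>..length S - \<delta>} \<and>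
        (\<forall>t \<le> 2 * \<delta>. chr S (i - \<delta> + t) = chr S (j - \<delta> + t))
        \<longrightarrow> (i \<in> P \<longleftrightarrow> j \<in> P)" using cons by blast
  show ?thesis
    using aux[OF cons ag] aux[OF cons2 ag2] assms(6,7,8) by auto
qed

end
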